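(* Let $\rho$ be a symmetric probability measure on $\mathbb{R}$ with positive variance $\sigma^2$ such that $(0,0)$ belongs to the interior of $D_\Lambda=\{(u,v)\in\mathbb{R}^2:\Lambda(u,v)<+\infty\}$, where $\Lambda(u,v)=\ln\int_{\mathbb{R}}e^{uz+vz^2}\,d\rho(z)$. Then there exist $\gamma>0$ and $\delta_0\in\,]0,\sigma^2[$ such that for every $\delta\in\,]0,\delta_0]$ there is $N\ge 1$ with \[\forall n\ge N\qquad \int_{\Delta^{*}} e^{nx^2/(2y)}\mathbf{1}_{\{0<y\le\delta\}}\,d\widetilde{\nu}_{n,\rho}(x,y)\le e^{-n\gamma}.\]
   Context: $\Delta=\{(x,y)\in\mathbb{R}^2: x^2\le y\}$ and $\Delta^{*}=\Delta\setminus\{(0,0)\}$. For $n\ge1$, $\widetilde{\nu}_{n,\rho}$ denotes the law of $\left(\frac1n\sum_{i=1}^n X_i,\frac1n\sum_{i=1}^n X_i^2\right)$ where $X_1,\dots,X_n$ are i.i.d. with law $\rho$. *)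

theory Defs
  imports "HOL-Probability.Probability"
begin

definition nu_tilde :: "nat \<Rightarrow> real measure \<Rightarrow> (real \<times> real) measure" where
  "nu_tilde n \<rho> = distr (PiM {..<n} (\<lambda>_. \<rho>)) borel
     (\<lambda>X. ((\<Sum>i<n. X i) / real n, (\<Sum>i<n. (X i)^2) / real n))"

definition Delta :: "(real \<times> real) set" where
  "Delta = {(x, y). x^2 \<le> y}"

definition Delta_star :: "(real \<times> real) set" where
  "Delta_star = Delta - {(0, 0)}"

definition D_Lambda :: "real measure \<Rightarrow> (real \<times> real) set" where
  "D_Lambda \<rho> = {(u, v). (\<integral>\<^sup>+ z. ennreal (exp (u * z + v * z^2)) \<partial>\<rho>) < \<infinity>}"

end

theory Submission
  imports Defs
begin

lemma atom_lt1:
  fixes \<rho> :: "real measure"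
  assumes P: "prob_space \<rho>" and S: "sets \<rho> = sets borel"
    and V: "prob_space.variance \<rho> (\<lambda>z. z) > 0"
  shows "measure \<rho> {0} < 1"
proof (rule ccontr)
  interpret prob_space \<rho> by (rule P)
  assume "\<not> measure \<rho> {0} < 1"
  hence m1: "measure \<rho> {0} = 1" using prob_le_1 by (meson not_less order_antisym)
  have sets0: "{0} \<in> sets \<rho>" using S by simp
  have ae: "AE z in \<rho>. z = 0"
  proof -
    have "AE z in \<rho>. z \<in> {0}" using sets0 m1 by (simp add: prob_eq_1)
    thus ?thesis by simp
  qed
  have mc: "f \<in> borel_measurable \<rho>" if "f \<in> borel_measurable borel" for f :: "real \<Rightarrow> real"
    by (subst measurable_cong_sets[OF S refl]) (rule that)
  have e: "expectation (\<lambda>z. z) = expectation (\<lambda>z. 0)"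
    by (rule integral_cong_AE) (rule mc, simp, rule mc, simp, use ae in simp)
  have "prob_space.variance \<rho> (\<lambda>z. z) = expectation (\<lambda>z. 0)"
    by (rule integral_cong_AE) (rule mc, simp, rule mc, simp, use ae e in simp)
  with V show False by simp
qed

lemma expL: assumes "(c::real) > 0" shows "(\<lambda>i::nat. exp (1/2 - real i * c)) \<longlonglongrightarrow> 0"
proof -
  have eq: "exp (1/2 - real i * c) = exp (1/2) * exp (- c) ^ i" for i
  proof -
    have "exp (1/2 - real i * c) = exp (1/2) * exp (real i * (- c))"
      by (subst exp_add[symmetric]) simp
    also have "\<dots> = exp (1/2) * exp (- c) ^ i" using exp_of_nat_mult[of i "- c"] by simp
    finally show ?thesis .
  qed
  have "(\<lambda>i. exp (- c) ^ i) \<longlonglongrightarrow> 0" using assms by (intro LIMSEQ_power_zero) simp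
  hence "(\<lambda>i. exp (1/2) * exp (- c) ^ i) \<longlonglongrightarrow> exp (1/2) * 0" by (intro tendsto_mult) auto
  thus ?thesis by (simp add: eq)
qed

definition hh :: "real \<Rightarrow> real \<Rightarrow> real" where
  "hh t z = (if z = 0 then 1 else exp (1/2 - t * z^2))"

lemma hh_meas[measurable]: "hh t \<in> borel_measurable borel"
  unfolding hh_def by measurable

lemma hh_lim:
  fixes \<rho> :: "real measure"
  assumes P: "prob_space \<rho>" and S: "sets \<rho> = sets borel"
  shows "(\<lambda>i. integral\<^sup>L \<rho> (hh (real i))) \<longlonglongrightarrow> measure \<rho> {0}"
proof -
  interpret prob_space \<rho> by (rule P)
  have mc: "f \<in> borel_measurable \<rho>" if "f \<in> borel_measurable borel" for f :: "real \<Rightarrow> real"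
    by (subst measurable_cong_sets[OF S refl]) (rule that)
  have "(\<lambda>i. integral\<^sup>L \<rho> (hh (real i))) \<longlonglongrightarrow> integral\<^sup>L \<rho> (indicator {0})"
  proof (rule integral_dominated_convergence[where w="\<lambda>_. exp (1/2)"])
    show "indicator {0} \<in> borel_measurable \<rho>" by (subst measurable_cong_sets[OF S refl]) simp
    show "\<And>i. hh (real i) \<in> borel_measurable \<rho>" by (subst measurable_cong_sets[OF S refl]) simp
    show "integrable \<rho> (\<lambda>_. exp (1/2))" by simp
    show "AE x in \<rho>. (\<lambda>i. hh (real i) x) \<longlonglongrightarrow> indicator {0} x"
    proof (rule AE_I2)
      fix x :: real
      show "(\<lambda>i. hh (real i) x) \<longlonglongrightarrow> indicator {0} x"
      proof (cases "x = 0")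
        case True thus ?thesis by (simp add: hh_def)
      next
        case False
        hence "x^2 > 0" by simp
        from expL[OF this] show ?thesis using False by (simp add: hh_def)
      qed
    qed
    show "\<And>i. AE x in \<rho>. norm (hh (real i) x) \<le> exp (1/2)"
      by (auto simp: hh_def)
  qed
  moreover have "integral\<^sup>L \<rho> (indicator {0}) = measure \<rho> {0}"
    using S by simp
  ultimately show ?thesis by simp
qed

lemma pointwise:
  fixes X :: "nat \<Rightarrow> real" and t \<delta> :: real
  assumes n: "n > 0" and t: "t \<ge> 0"
  shows "ennreal (exp (real n * ((\<Sum>i<n. X i) / real n)^2 / (2 * ((\<Sum>i<n. (X i)^2) / real n))))
     * indicator Delta_star ((\<Sum>i<n. X i) / real n, (\<Sum>i<n. (X i)^2) / real n)
     * indicator {p. 0 < snd p \<and> snd p \<le> \<delta>} ((\<Sum>i<n. X i) / real n, (\<Sum>i<n. (X i)^2) / real n)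
     \<le> (\<Prod>i<n. ennreal (exp (t * \<delta>) * hh t (X i)))"
proof (cases "0 < (\<Sum>i<n. (X i)^2) / real n \<and> (\<Sum>i<n. (X i)^2) / real n \<le> \<delta>")
  case False thus ?thesis by (auto simp: indicator_def)
next
  case True
  define S where "S = (\<Sum>i<n. X i)"
  define Q where "Q = (\<Sum>i<n. (X i)^2)"
  define A where "A = {i. i < n \<and> X i \<noteq> 0}"
  have fA: "finite A" unfolding A_def by simp
  have Qpos: "Q > 0" and Qle: "Q \<le> real n * \<delta>" using True n by (auto simp: Q_def field_simps)
  have SA: "S = (\<Sum>i\<in>A. X i)" unfolding S_def A_def
    by (rule sum.mono_neutral_right) auto
  have QA: "Q = (\<Sum>i\<in>A. (X i)^2)" unfolding Q_def A_def
    by (rule sum.mono_neutral_right) auto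
  have CS: "S^2 \<le> Q * card A" unfolding SA QA by (rule sum_squared_le_sum_of_squares)
  have key1: "real n * (S / real n)^2 / (2 * (Q / real n)) = S^2 / (2 * Q)"
    using n by (simp add: field_simps power2_eq_square)
  have key2: "S^2 / (2 * Q) \<le> card A / 2"
    using CS Qpos by (simp add: field_simps)
  have sumhalf: "(\<Sum>i<n. (if X i = 0 then 0 else 1/2::real)) = card A / 2"
  proof -
    have "(\<Sum>i<n. (if X i = 0 then 0 else 1/2::real)) = (\<Sum>i\<in>A. 1/2)"
      unfolding A_def by (rule sum.mono_neutral_cong_right) auto
    thus ?thesis by simp
  qed
  have hhexp: "exp (t * \<delta>) * hh t z = exp (t * \<delta> + ((if z = 0 then 0 else 1/2) - t * z^2))" for z
    by (simp add: hh_def exp_add)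
  have sumeq: "(\<Sum>i<n. t * \<delta> + ((if X i = 0 then 0 else 1/2) - t * (X i)^2))
       = real n * t * \<delta> + card A / 2 - t * Q"
    by (simp add: sum.distrib sum_subtractf sumhalf Q_def sum_distrib_left)
  have "S^2 / (2 * Q) \<le> real n * t * \<delta> + card A / 2 - t * Q"
    using key2 mult_left_mono[OF Qle t] by (simp add: algebra_simps)
  hence "exp (S^2 / (2 * Q)) \<le> (\<Prod>i<n. exp (t * \<delta>) * hh t (X i))"
    by (simp add: hhexp exp_sum[symmetric] sumeq)
  hence "ennreal (exp (S^2 / (2 * Q))) \<le> (\<Prod>i<n. ennreal (exp (t * \<delta>) * hh t (X i)))"
    by (simp add: prod_ennreal hh_def ennreal_leI)
  moreover have "indicator Delta_star ((\<Sum>i<n. X i) / real n, (\<Sum>i<n. (X i)^2) / real n) \<le> (1::ennreal)"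
    by (simp add: indicator_def)
  ultimately show ?thesis using True
    unfolding key1[unfolded S_def Q_def] by (auto simp: indicator_def S_def Q_def)
qed


lemma PiM_meas:
  "(\<lambda>X. ((\<Sum>i<n. X i) / real n, (\<Sum>i<n. (X i)^2) / real n))
     \<in> borel_measurable (PiM {..<n} (\<lambda>_. borel :: real measure))"
  by measurable

lemma g_meas:
  "(\<lambda>p. ennreal (exp (real n * (fst p)^2 / (2 * snd p)))
              * indicator Delta_star p * indicator {p. 0 < snd p \<and> snd p \<le> (\<delta>::real)} p)
     \<in> borel_measurable borel"
proof -
  have D: "Delta \<in> sets borel" unfolding Delta_def
  proof -
    have "{(x, y). x^2 \<le> y} = {p::real\<times>real. fst p ^ 2 \<le> snd p}" by auto
    also have "\<dots> \<in> sets borel"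
      by (intro borel_closed closed_Collect_le continuous_intros)
    finally show "{(x::real, y). x^2 \<le> y} \<in> sets borel" .
  qed
  have "Delta_star \<in> sets borel" unfolding Delta_star_def
    by (rule sets.Diff[OF D]) (intro borel_closed closed_singleton)
  note this[unfolded borel_prod[symmetric], measurable]
  show ?thesis unfolding borel_prod[symmetric] by measurable
qed

theorem proposition4:
  fixes \<rho> :: "real measure"
  assumes "prob_space \<rho>"
    and "sets \<rho> = sets borel"
    and "distr \<rho> borel uminus = \<rho>"
    and "prob_space.variance \<rho> (\<lambda>z. z) > 0"
    and "(0, 0) \<in> interior (D_Lambda \<rho>)"
  shows "\<exists>\<gamma>>0. \<exists>\<delta>0. 0 < \<delta>0 \<and> \<delta>0 < prob_space.variance \<rho> (\<lambda>z. z) \<and>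
    (\<forall>\<delta>. 0 < \<delta> \<and> \<delta> \<le> \<delta>0 \<longrightarrow>
      (\<exists>N\<ge>1. \<forall>n\<ge>N.
        (\<integral>\<^sup>+ p. ennreal (exp (real n * (fst p)^2 / (2 * snd p)))
              * indicator Delta_star p * indicator {p. 0 < snd p \<and> snd p \<le> \<delta>} p
           \<partial>nu_tilde n \<rho>) \<le> ennreal (exp (- real n * \<gamma>))))"
proof -
  note P = assms(1) and S = assms(2) and V = assms(4)
  interpret prob_space \<rho> by (rule P)
  define var where "var = prob_space.variance \<rho> (\<lambda>z. z)"
  define p0 where "p0 = measure \<rho> {0}"
  have p0: "p0 < 1" unfolding p0_def by (rule atom_lt1[OF P S V])
  have p0nn: "0 \<le> p0" unfolding p0_def by simp
  define q' where "q' = (1 + p0) / 2"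
  have q'pos: "0 < q'" and q'1: "q' < 1" and p0q: "p0 < q'" using p0 p0nn by (auto simp: q'_def)
  have "eventually (\<lambda>i. integral\<^sup>L \<rho> (hh (real i)) < q') sequentially"
    using hh_lim[OF P S] p0q unfolding p0_def by (rule order_tendstoD)
  then obtain i where qi: "integral\<^sup>L \<rho> (hh (real i)) < q'"
    by (auto simp: eventually_sequentially)
  define t where "t = real i"
  have t0: "t \<ge> 0" by (simp add: t_def)
  define q where "q = integral\<^sup>L \<rho> (hh t)"
  have qq': "q < q'" using qi by (simp add: q_def t_def)
  define c where "c = - ln q'"
  have c: "c > 0" using q'pos q'1 by (simp add: c_def)
  have q'eq: "q' = exp (- c)" using q'pos by (simp add: c_def)
  define \<delta>0 where "\<delta>0 = min (var / 2) (c / (2 * (t + 1)))"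
  have vpos: "var > 0" using V by (simp add: var_def)
  have d0: "0 < \<delta>0" "\<delta>0 < var" using vpos c t0 by (auto simp: \<delta>0_def)
  have td0: "t * \<delta>0 \<le> c / 2"
  proof -
    have "\<delta>0 \<le> c / (2 * (t + 1))" by (simp add: \<delta>0_def)
    hence "t * \<delta>0 \<le> t * (c / (2 * (t + 1)))" by (rule mult_left_mono[OF _ t0])
    also have "\<dots> \<le> c / 2" using t0 c by (simp add: field_simps)
    finally show ?thesis .
  qed
  have mc: "f \<in> borel_measurable \<rho>" if "f \<in> borel_measurable borel" for f :: "real \<Rightarrow> real"
    by (subst measurable_cong_sets[OF S refl]) (rule that)
  have hhnn: "0 \<le> hh t z" for z by (simp add: hh_def)
  have qnn: "0 \<le> q" unfolding q_def by (rule Bochner_Integration.integral_nonneg) (simp add: hhnn)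
  have hhle: "hh t z \<le> exp (1/2)" for z using t0 by (simp add: hh_def)
  interpret PS: product_sigma_finite "\<lambda>_::nat. \<rho>"
    by unfold_locales
  show ?thesis unfolding var_def[symmetric]
  proof (rule exI[of _ "c/2"], intro conjI exI[of _ \<delta>0] allI impI)
    show "0 < c / 2" using c by simp
    show "0 < \<delta>0" "\<delta>0 < var" by (fact d0)+
    fix \<delta> :: real assume \<delta>: "0 < \<delta> \<and> \<delta> \<le> \<delta>0"
    define r where "r = exp (t * \<delta>) * q"
    have r: "r \<le> exp (- (c/2))"
    proof -
      have "r \<le> exp (t * \<delta>0) * q'"
        unfolding r_def using qq' \<delta> t0 qnn
        by (intro mult_mono) (auto simp: mult_left_mono)
      also have "\<dots> \<le> exp (c/2) * exp (- c)" unfolding q'eq using td0 by simp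
      also have "\<dots> = exp (- (c/2))" by (simp add: exp_add[symmetric])
      finally show ?thesis .
    qed
    have int1: "(\<integral>\<^sup>+ z. ennreal (exp (t * \<delta>) * hh t z) \<partial>\<rho>) = ennreal r"
    proof -
      have intg: "integrable \<rho> (\<lambda>z. exp (t * \<delta>) * hh t z)"
        by (intro integrable_mult_right integrable_const_bound[where B="exp (1/2)"])
           (auto intro!: mc simp: hhle hhnn abs_of_nonneg)
      have "(\<integral>\<^sup>+ z. ennreal (exp (t * \<delta>) * hh t z) \<partial>\<rho>) = ennreal (integral\<^sup>L \<rho> (\<lambda>z. exp (t * \<delta>) * hh t z))"
        by (rule nn_integral_eq_integral[OF intg]) (simp add: hhnn)
      thus ?thesis by (simp add: r_def q_def)
    qed
    show "\<exists>N\<ge>1. \<forall>n\<ge>N. (\<integral>\<^sup>+ p. ennreal (exp (real n * (fst p)^2 / (2 * snd p)))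
              * indicator Delta_star p * indicator {p. 0 < snd p \<and> snd p \<le> \<delta>} p
           \<partial>nu_tilde n \<rho>) \<le> ennreal (exp (- real n * (c/2)))"
    proof (intro exI[of _ 1] conjI allI impI)
      fix n :: nat assume n1: "1 \<le> n"
      hence n: "n > 0" by simp
      have Fm: "(\<lambda>X. ((\<Sum>i<n. X i) / real n, (\<Sum>i<n. (X i)^2) / real n))
           \<in> borel_measurable (PiM {..<n} (\<lambda>_. \<rho>))"
        using PiM_meas[of n] by (subst measurable_cong_sets[OF sets_PiM_cong[OF refl S] refl]) simp
      have "(\<integral>\<^sup>+ p. ennreal (exp (real n * (fst p)^2 / (2 * snd p)))
              * indicator Delta_star p * indicator {p. 0 < snd p \<and> snd p \<le> \<delta>} p
           \<partial>nu_tilde n \<rho>)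
        = (\<integral>\<^sup>+ X. ennreal (exp (real n * ((\<Sum>i<n. X i) / real n)^2 / (2 * ((\<Sum>i<n. (X i)^2) / real n))))
              * indicator Delta_star ((\<Sum>i<n. X i) / real n, (\<Sum>i<n. (X i)^2) / real n)
              * indicator {p. 0 < snd p \<and> snd p \<le> \<delta>} ((\<Sum>i<n. X i) / real n, (\<Sum>i<n. (X i)^2) / real n)
           \<partial>PiM {..<n} (\<lambda>_. \<rho>))"
        unfolding nu_tilde_def by (subst nn_integral_distr[OF Fm]) (simp_all add: g_meas)
      also have "\<dots> \<le> (\<integral>\<^sup>+ X. (\<Prod>i<n. ennreal (exp (t * \<delta>) * hh t (X i))) \<partial>PiM {..<n} (\<lambda>_. \<rho>))"
        by (rule nn_integral_mono) (rule pointwise[OF n t0])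
      also have "\<dots> = (\<Prod>i<n. (\<integral>\<^sup>+ z. ennreal (exp (t * \<delta>) * hh t z) \<partial>\<rho>))"
      proof (rule PS.product_nn_integral_prod)
        show "(\<lambda>z. ennreal (exp (t * \<delta>) * hh t z)) \<in> borel_measurable \<rho>" for i
          by (subst measurable_cong_sets[OF S refl]) measurable
      qed simp
      also have "\<dots> = ennreal r ^ n" by (simp add: int1)
      also have "\<dots> \<le> ennreal (exp (- (c/2))) ^ n"
        by (intro power_mono ennreal_leI r) simp
      also have "\<dots> = ennreal (exp (- real n * (c/2)))"
        by (simp add: ennreal_power exp_of_nat_mult[symmetric])
      finally show "(\<integral>\<^sup>+ p. ennreal (exp (real n * (fst p)^2 / (2 * snd p)))
              * indicator Delta_star p * indicator {p. 0 < snd p \<and> snd p \<le> \<delta>} p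
           \<partial>nu_tilde n \<rho>) \<le> ennreal (exp (- real n * (c/2)))" .
    qed simp
  qed
qed

end
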